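(* Let $\mathbf{C}\in\mathbb{R}^{dm\times dm}$ be the matrix defined in the context. Consider Problem (A): minimize $\langle \mathbf{C},\mathbf{R}^\top\mathbf{R}\rangle$ over $\mathbf{R}=[\mathbf{R}_1\cdots\mathbf{R}_m]\in\mathbb{R}^{d\times dm}$ subject to $\mathbf{R}_1,\ldots,\mathbf{R}_m\in\mathbb{SO}(d)$; Problem (B): minimize $\langle\mathbf{C},\mathbf{G}\rangle$ over symmetric $\mathbf{G}\in\mathbb{R}^{dm\times dm}$ subject to $\mathbf{G}$ positive semidefinite, $\mathrm{rank}(\mathbf{G})\le d$, $\mathbf{G}_{ii}=\mathbf{I}$ for $i\in\{1,\ldots,m\}$, and $\mathbf{G}_{i,i+1}\in\mathbb{SO}(d)$ for $i\in\{1,\ldots,m-1\}$. Then Problems (A) and (B) are equivalent: $\mathbf{G}^\star$ is a minimizer of (B) if and only if $\mathbf{G}^\star=(\mathbf{R}^\star)^\top\mathbf{R}^\star$ for some minimizer $\mathbf{R}^\star$ of (A).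
   Context: $\mathbb{SO}(d)=\{\mathbf{R}\in\mathbb{R}^{d\times d}:\mathbf{R}^\top\mathbf{R}=\mathbf{I},\ \det\mathbf{R}=1\}$; $\langle\mathbf{A},\mathbf{B}\rangle=\mathrm{trace}(\mathbf{A}^\top\mathbf{B})$. For $\mathbf{X}\in\mathbb{R}^{dm\times dm}$, $\mathbf{X}_{ij}$ denotes its $(i,j)$-th $d\times d$ block. Data: point sets $\mathcal{P}_1,\ldots,\mathcal{P}_m\subset\mathbb{R}^d$; write $i\sim j$ if $\mathcal{P}_i$ and $\mathcal{P}_j$ share common points, with $n_{ij}$ common points whose local coordinates are $\boldsymbol{x}^k_{ij}$ (in $\mathcal{P}_i$) and $\boldsymbol{x}^k_{ji}$ (in $\mathcal{P}_j$), $1\le k\le n_{ij}$. Let $\boldsymbol{e}_i\in\mathbb{R}^m$ be the $i$-th standard basis vector, $\boldsymbol{e}_{ij}=\boldsymbol{e}_i-\boldsymbol{e}_j$, $\boldsymbol{d}^k_{ij}=(\boldsymbol{e}_i\otimes\mathbf{I})\boldsymbol{x}^k_{ij}-(\boldsymbol{e}_j\otimes\mathbf{I})\boldsymbol{x}^k_{ji}\in\mathbb{R}^{dm}$. Define $\mathbf{L}=\sum_{i\sim j}n_{ij}\boldsymbol{e}_{ij}\boldsymbol{e}_{ij}^\top$, $\mathbf{B}=\sum_{i\sim j}\sum_{k=1}^{n_{ij}}\boldsymbol{d}^k_{ij}\boldsymbol{e}_{ij}^\top$, $\mathbf{D}=\sum_{i\sim j}\sum_{k=1}^{n_{ij}}\boldsymbol{d}^k_{ij}(\boldsymbol{d}^k_{ij})^\top$,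 and $\mathbf{C}=\mathbf{D}-\mathbf{B}\mathbf{L}^\dagger\mathbf{B}^\top$, where $\mathbf{L}^\dagger$ is the Moore–Penrose pseudo-inverse. *)

theory Defs
  imports "Jordan_Normal_Form.DL_Rank" "Jordan_Normal_Form.Determinant"
begin

definition mat_trace :: "real mat \<Rightarrow> real" where
  "mat_trace A = (\<Sum>i<dim_row A. A $$ (i, i))"

definition mat_inner :: "real mat \<Rightarrow> real mat \<Rightarrow> real" where
  "mat_inner A B = mat_trace (transpose_mat A * B)"

definition SO :: "nat \<Rightarrow> real mat set" where
  "SO d = {Q. Q \<in> carrier_mat d d \<and> transpose_mat Q * Q = 1\<^sub>m d \<and> det Q = 1}"

definition psd :: "real mat \<Rightarrow> bool" where
  "psd A \<longleftrightarrow> (\<exists>n. A \<in> carrier_mat n n \<and> transpose_mat A = A \<and>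
      (\<forall>v \<in> carrier_vec n. 0 \<le> v \<bullet> (A *\<^sub>v v)))"

definition mat_rank :: "real mat \<Rightarrow> nat" where
  "mat_rank A = vec_space.rank (dim_row A) A"

definition pinv :: "real mat \<Rightarrow> real mat" where
  "pinv A = (THE X. X \<in> carrier_mat (dim_col A) (dim_row A) \<and>
      A * X * A = A \<and> X * A * X = X \<and>
      transpose_mat (A * X) = A * X \<and> transpose_mat (X * A) = X * A)"

definition outer :: "real vec \<Rightarrow> real vec \<Rightarrow> real mat" where
  "outer u v = mat (dim_vec u) (dim_vec v) (\<lambda>(a, b). u $ a * v $ b)"

definition sum_mats :: "nat \<Rightarrow> nat \<Rightarrow> ('i \<Rightarrow> real mat) \<Rightarrow> 'i set \<Rightarrow> real mat" where
  "sum_mats nr nc f S = mat nr nc (\<lambda>(a, b). \<Sum>s\<in>S. f s $$ (a, b))"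

section \<open>Block notation (0-based block indices)\<close>

definition blk :: "nat \<Rightarrow> real mat \<Rightarrow> nat \<Rightarrow> nat \<Rightarrow> real mat" where
  "blk d X i j = mat d d (\<lambda>(a, b). X $$ (d * i + a, d * j + b))"

definition cblk :: "nat \<Rightarrow> real mat \<Rightarrow> nat \<Rightarrow> real mat" where
  "cblk d R i = mat d d (\<lambda>(a, b). R $$ (a, d * i + b))"

text \<open>(e_i \<otimes> I) v : places v in the i-th block of a vector of length dm.\<close>
definition emb :: "nat \<Rightarrow> nat \<Rightarrow> nat \<Rightarrow> real vec \<Rightarrow> real vec" where
  "emb d m i v = vec (d * m) (\<lambda>c. if c div d = i then v $ (c mod d) else 0)"

text \<open>Data: n i j = number of common points of P_i and P_j (i \<sim> j iff n i j > 0);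
  x i j k = local coordinates in P_i of the k-th common point (k < n i j).
  Pairs i \<sim> j are summed once each (as unordered pairs, i < j); 0-based indices.\<close>
definition edges :: "nat \<Rightarrow> (nat \<Rightarrow> nat \<Rightarrow> nat) \<Rightarrow> (nat \<times> nat) set" where
  "edges m n = {(i, j). i < j \<and> j < m \<and> 0 < n i j}"

definition evec :: "nat \<Rightarrow> nat \<Rightarrow> nat \<Rightarrow> real vec" where
  "evec m i j = unit_vec m i - unit_vec m j"

definition dvec :: "nat \<Rightarrow> nat \<Rightarrow> (nat \<Rightarrow> nat \<Rightarrow> nat \<Rightarrow> real vec) \<Rightarrow> nat \<Rightarrow> nat \<Rightarrow> nat \<Rightarrow> real vec" where
  "dvec d m x i j k = emb d m i (x i j k) - emb d m j (x j i k)"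

definition Lmat :: "nat \<Rightarrow> (nat \<Rightarrow> nat \<Rightarrow> nat) \<Rightarrow> real mat" where
  "Lmat m n = sum_mats m m (\<lambda>(i, j). real (n i j) \<cdot>\<^sub>m outer (evec m i j) (evec m i j)) (edges m n)"

definition Bmat :: "nat \<Rightarrow> nat \<Rightarrow> (nat \<Rightarrow> nat \<Rightarrow> nat) \<Rightarrow> (nat \<Rightarrow> nat \<Rightarrow> nat \<Rightarrow> real vec) \<Rightarrow> real mat" where
  "Bmat d m n x = sum_mats (d * m) m
     (\<lambda>((i, j), k). outer (dvec d m x i j k) (evec m i j))
     (SIGMA e : edges m n. {..< n (fst e) (snd e)})"

definition Dmat :: "nat \<Rightarrow> nat \<Rightarrow> (nat \<Rightarrow> nat \<Rightarrow> nat) \<Rightarrow> (nat \<Rightarrow> nat \<Rightarrow> nat \<Rightarrow> real vec) \<Rightarrow> real mat" where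
  "Dmat d m n x = sum_mats (d * m) (d * m)
     (\<lambda>((i, j), k). outer (dvec d m x i j k) (dvec d m x i j k))
     (SIGMA e : edges m n. {..< n (fst e) (snd e)})"

definition Cmat :: "nat \<Rightarrow> nat \<Rightarrow> (nat \<Rightarrow> nat \<Rightarrow> nat) \<Rightarrow> (nat \<Rightarrow> nat \<Rightarrow> nat \<Rightarrow> real vec) \<Rightarrow> real mat" where
  "Cmat d m n x = Dmat d m n x - Bmat d m n x * pinv (Lmat m n) * transpose_mat (Bmat d m n x)"

definition feasA :: "nat \<Rightarrow> nat \<Rightarrow> real mat \<Rightarrow> bool" where
  "feasA d m R \<longleftrightarrow> R \<in> carrier_mat d (d * m) \<and> (\<forall>i<m. cblk d R i \<in> SO d)"

definition minA :: "nat \<Rightarrow> nat \<Rightarrow> real mat \<Rightarrow> real mat \<Rightarrow> bool" where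
  "minA d m C R \<longleftrightarrow> feasA d m R \<and>
     (\<forall>R'. feasA d m R' \<longrightarrow> mat_inner C (transpose_mat R * R) \<le> mat_inner C (transpose_mat R' * R'))"

definition feasB :: "nat \<Rightarrow> nat \<Rightarrow> real mat \<Rightarrow> bool" where
  "feasB d m G \<longleftrightarrow> G \<in> carrier_mat (d * m) (d * m) \<and> transpose_mat G = G \<and> psd G \<and>
     mat_rank G \<le> d \<and> (\<forall>i<m. blk d G i i = 1\<^sub>m d) \<and>
     (\<forall>i. i + 1 < m \<longrightarrow> blk d G i (i + 1) \<in> SO d)"

definition minB :: "nat \<Rightarrow> nat \<Rightarrow> real mat \<Rightarrow> real mat \<Rightarrow> bool" where
  "minB d m C G \<longleftrightarrow> feasB d m G \<and>
     (\<forall>G'. feasB d m G' \<longrightarrow> mat_inner C G \<le> mat_inner C G')"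

end

theory Submission
  imports Defs "Jordan_Normal_Form.DL_Rank_Submatrix"
begin

lemma idx_lt: "a < d \<Longrightarrow> i < m \<Longrightarrow> d * i + a < d * (m::nat)"
proof -
  assume "a < d" "i < m"
  then have "d * i + a < d * (i+1)" by simp
  also have "\<dots> \<le> d * m" using \<open>i<m\<close> by (intro mult_le_mono2) simp
  finally show ?thesis .
qed

lemma blk_RtR:
  assumes R: "R \<in> carrier_mat d (d*m)" and i: "i < m" and j: "j < m"
  shows "blk d (transpose_mat R * R) i j = transpose_mat (cblk d R i) * cblk d R j"
  apply (rule eq_matI)
  using R idx_lt[OF _ i, of _ d] idx_lt[OF _ j, of _ d]
  by (auto simp: blk_def cblk_def scalar_prod_def)

lemma psd_RtR:
  assumes R: "R \<in> carrier_mat d N"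
  shows "psd (transpose_mat R * R)"
  unfolding psd_def
proof (intro exI[of _ N] conjI ballI)
  show "transpose_mat R * R \<in> carrier_mat N N" using R by auto
  show "transpose_mat (transpose_mat R * R) = transpose_mat R * R"
    using R by (subst transpose_mult[of _ N d _ N]) auto
  fix v :: "real vec" assume v: "v \<in> carrier_vec N"
  have "v \<bullet> ((transpose_mat R * R) *\<^sub>v v) = v \<bullet> (transpose_mat R *\<^sub>v (R *\<^sub>v v))"
    using R v by (subst assoc_mult_mat_vec[of _ N d _ N]) auto
  also have "\<dots> = (transpose_mat R *\<^sub>v (R *\<^sub>v v)) \<bullet> v"
    using R v by (intro comm_scalar_prod[of _ N]) auto
  also have "\<dots> = (R *\<^sub>v v) \<bullet> (R *\<^sub>v v)"
    using R v by (intro transpose_vec_mult_scalar) auto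
  also have "\<dots> \<ge> 0" unfolding scalar_prod_def by (intro sum_nonneg) auto
  finally show "0 \<le> v \<bullet> ((transpose_mat R * R) *\<^sub>v v)" .
qed

lemma rank_RtR:
  assumes R: "R \<in> carrier_mat d N"
  shows "mat_rank (transpose_mat R * R) \<le> d"
proof -
  define A where "A k = mat N N (\<lambda>(i,j). \<Sum>l<k. R $$ (l,i) * R $$ (l,j))" for k
  have "vec_space.rank N (A k) \<le> k" for k
  proof (induction k)
    case 0
    have "A 0 = 0\<^sub>m N N" unfolding A_def by (rule eq_matI) auto
    then show ?case by (simp add: vec_space.rank_0I)
  next
    case (Suc k)
    define E where "E = mat N N (\<lambda>(i,j). R $$ (k,i) * R $$ (k,j))"
    have "A (Suc k) = A k + E" unfolding A_def E_def by (rule eq_matI) auto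
    moreover have "vec_space.rank N E \<le> 1"
      by (rule vec_space.rank_le_1_product_entries[of E N N "\<lambda>i. R $$ (k,i)" "\<lambda>j. R $$ (k,j)"])
        (auto simp: E_def)
    moreover have "vec_space.rank N (A k + E) \<le> vec_space.rank N (A k) + vec_space.rank N E"
      by (rule vec_space.rank_subadditive) (auto simp: A_def E_def)
    ultimately show ?case using Suc.IH by (metis add_mono_thms_linordered_semiring(1) le_trans plus_1_eq_Suc add.commute)
  qed
  moreover have "transpose_mat R * R = A d"
    unfolding A_def using R by (intro eq_matI) (auto simp: scalar_prod_def atLeast0LessThan)
  moreover have "dim_row (A d) = N" by (simp add: A_def)
  ultimately show ?thesis unfolding mat_rank_def by simp
qed

lemma bordered_det:
  fixes S :: "real mat"
  assumes S: "S \<in> carrier_mat (Suc d) (Suc d)"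
    and I: "\<And>a b. a < d \<Longrightarrow> b < d \<Longrightarrow> S $$ (a,b) = (if a = b then 1 else 0)"
  shows "det S = S $$ (d,d) - (\<Sum>k<d. S $$ (d,k) * S $$ (k,d))"
proof -
  define M :: "real mat" where "M = mat (Suc d) (Suc d) (\<lambda>(i,j). if i = j then 1 else if j = d \<and> i < d then - S $$ (i,d) else 0)"
  have Mc: "M \<in> carrier_mat (Suc d) (Suc d)" unfolding M_def by simp
  have "det M = prod_list (diag_mat M)"
    by (rule det_upper_triangular[OF _ Mc]) (auto simp: upper_triangular_def M_def)
  also have "\<dots> = 1" unfolding prod_list_diag_prod by (intro prod.neutral) (auto simp: M_def)
  finally have dM: "det M = 1" .
  have T: "(S * M) $$ (i,j) = (if j < d then S $$ (i,j) else S $$ (i,d) - (\<Sum>k<d. S $$ (i,k) * S $$ (k,d)))"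
    if "i < Suc d" "j < Suc d" for i j
  proof -
    have "(S * M) $$ (i,j) = (\<Sum>k<Suc d. S $$ (i,k) * M $$ (k,j))"
      using that S Mc by (simp add: scalar_prod_def atLeast0LessThan)
    also have "\<dots> = (\<Sum>k<d. S $$ (i,k) * M $$ (k,j)) + S $$ (i,d) * M $$ (d,j)"
      by simp
    also have "\<dots> = (if j < d then S $$ (i,j) else S $$ (i,d) - (\<Sum>k<d. S $$ (i,k) * S $$ (k,d)))"
    proof (cases "j < d")
      case True
      have "(\<Sum>k<d. S $$ (i,k) * M $$ (k,j)) = (\<Sum>k<d. if k = j then S $$ (i,j) else 0)"
        using True that by (intro sum.cong) (auto simp: M_def)
      also have "\<dots> = S $$ (i,j)" using True by simp
      finally show ?thesis using True that by (simp add: M_def)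
    next
      case False
      then have jd: "j = d" using that by simp
      have "(\<Sum>k<d. S $$ (i,k) * M $$ (k,j)) = (\<Sum>k<d. - (S $$ (i,k) * S $$ (k,d)))"
        using jd by (intro sum.cong) (auto simp: M_def)
      then show ?thesis using jd by (simp add: M_def sum_negf)
    qed
    finally show ?thesis .
  qed
  have SMc: "S * M \<in> carrier_mat (Suc d) (Suc d)" using S Mc by simp
  have "det (S * M) = prod_list (diag_mat (S * M))"
  proof (rule det_lower_triangular[OF _ SMc])
    fix i j assume ij: "i < j" "j < Suc d"
    show "(S * M) $$ (i,j) = 0"
    proof (cases "j < d")
      case True then show ?thesis using ij I T by simp
    next
      case False
      then have jd: "j = d" using ij by simp
      have "(\<Sum>k<d. S $$ (i,k) * S $$ (k,d)) = (\<Sum>k<d. if k = i then S $$ (i,d) else 0)"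
        using ij jd I by (intro sum.cong) auto
      also have "\<dots> = S $$ (i,d)" using ij jd by simp
      finally show ?thesis using T ij jd by simp
    qed
  qed
  also have "\<dots> = (\<Prod>i<Suc d. (S * M) $$ (i,i))"
    unfolding prod_list_diag_prod using SMc S by (simp add: atLeast0LessThan)
  also have "\<dots> = (\<Prod>i<d. (S * M) $$ (i,i)) * (S * M) $$ (d,d)" by simp
  also have "(\<Prod>i<d. (S * M) $$ (i,i)) = 1"
    by (intro prod.neutral) (auto simp: T I)
  also have "(S * M) $$ (d,d) = S $$ (d,d) - (\<Sum>k<d. S $$ (d,k) * S $$ (k,d))" using T by simp
  finally have "det (S * M) = S $$ (d,d) - (\<Sum>k<d. S $$ (d,k) * S $$ (k,d))" by simp
  moreover have "det (S * M) = det S * det M" by (rule det_mult[OF S Mc])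
  ultimately show ?thesis using dM by simp
qed

lemma pick_insert_lt:
  assumes p: "d \<le> p" and i: "i < Suc d"
  shows "pick (insert p {..<d}) i = (if i < d then i else p)"
proof (cases "i < d")
  case True
  have "{a \<in> insert p {..<d}. a < i} = {..<i}" using True p by auto
  then have "card {a \<in> insert p {..<d}. a < i} = i" by simp
  then show ?thesis using pick_card_in_set[of i "insert p {..<d}"] True by simp
next
  case False
  then have id: "i = d" using i by simp
  have "{a \<in> insert p {..<d}. a < p} = {..<d}" using p by auto
  then have "card {a \<in> insert p {..<d}. a < p} = d" by simp
  then show ?thesis using pick_card_in_set[of p "insert p {..<d}"] id by simp
qed

lemma gram_from_rank:
  fixes G :: "real mat"
  assumes G: "G \<in> carrier_mat N N" and sym: "transpose_mat G = G" and dN: "d \<le> N"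
    and Id: "\<And>a b. a < d \<Longrightarrow> b < d \<Longrightarrow> G $$ (a,b) = (if a = b then 1 else 0)"
    and rk: "vec_space.rank N G \<le> d"
  shows "G = transpose_mat (mat d N (\<lambda>(a,c). G $$ (a,c))) * mat d N (\<lambda>(a,c). G $$ (a,c))"
proof -
  have Gs: "G $$ (a,b) = G $$ (b,a)" if "a < N" "b < N" for a b
    using arg_cong[OF sym, of "\<lambda>X. X $$ (b,a)"] that G by simp
  have key: "G $$ (p,q) = (\<Sum>k<d. G $$ (k,p) * G $$ (k,q))" if pq: "p < N" "q < N" for p q
  proof (cases "p < d")
    case True
    have "(\<Sum>k<d. G $$ (k,p) * G $$ (k,q)) = (\<Sum>k<d. if k = p then G $$ (p,q) else 0)"
      using True Id by (intro sum.cong) auto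
    then show ?thesis using True by simp
  next
    case pd: False
    show ?thesis
    proof (cases "q < d")
      case True
      have "(\<Sum>k<d. G $$ (k,p) * G $$ (k,q)) = (\<Sum>k<d. if k = q then G $$ (q,p) else 0)"
        using True Id by (intro sum.cong) auto
      then show ?thesis using True Gs[of q p] pq by simp
    next
      case qd: False
      show ?thesis
      proof (rule ccontr)
        assume ne: "G $$ (p,q) \<noteq> (\<Sum>k<d. G $$ (k,p) * G $$ (k,q))"
        define I where "I = insert p {..<d}"
        define J where "J = insert q {..<d}"
        have cI: "card {i. i < dim_row G \<and> i \<in> I} = Suc d"
        proof -
          have "{i. i < dim_row G \<and> i \<in> I} = I" using G pq dN unfolding I_def by auto
          moreover have "card I = Suc d" unfolding I_def using pd by (simp add: card_insert_disjoint)
          ultimately show ?thesis by (simp only:)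
        qed
        have cJ: "card {j. j < dim_col G \<and> j \<in> J} = Suc d"
        proof -
          have "{i. i < dim_col G \<and> i \<in> J} = J" using G pq dN unfolding J_def by auto
          moreover have "card J = Suc d" unfolding J_def using qd by (simp add: card_insert_disjoint)
          ultimately show ?thesis by (simp only:)
        qed
        define S where "S = submatrix G I J"
        have Sc: "S \<in> carrier_mat (Suc d) (Suc d)" using cI cJ unfolding carrier_mat_def S_def submatrix_def by (simp only: dim_row_mat dim_col_mat) simp
        have Se: "S $$ (i,j) = G $$ (if i < d then i else p, if j < d then j else q)"
          if ij: "i < Suc d" "j < Suc d" for i j
        proof -
          have "S $$ (i,j) = G $$ (pick I i, pick J j)"
            unfolding S_def by (rule submatrix_index) (use cI cJ ij in simp_all)
          moreover have "pick I i = (if i < d then i else p)"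
            unfolding I_def by (rule pick_insert_lt) (use pd ij in simp_all)
          moreover have "pick J j = (if j < d then j else q)"
            unfolding J_def by (rule pick_insert_lt) (use qd ij in simp_all)
          ultimately show ?thesis by simp
        qed
        have "det S = S $$ (d,d) - (\<Sum>k<d. S $$ (d,k) * S $$ (k,d))"
          by (rule bordered_det[OF Sc]) (simp add: Se Id)
        also have "\<dots> = G $$ (p,q) - (\<Sum>k<d. G $$ (k,p) * G $$ (k,q))"
        proof -
          have "S $$ (d,d) = G $$ (p,q)" using Se by simp
          moreover have "(\<Sum>k<d. S $$ (d,k) * S $$ (k,d)) = (\<Sum>k<d. G $$ (k,p) * G $$ (k,q))"
          proof (intro sum.cong refl)
            fix k assume k: "k \<in> {..<d}"
            have "G $$ (p,k) = G $$ (k,p)" using Gs[of p k] pq k dN by simp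
            then show "S $$ (d,k) * S $$ (k,d) = G $$ (k,p) * G $$ (k,q)" using Se k by simp
          qed
          ultimately show ?thesis by simp
        qed
        finally have "det (submatrix G I J) \<noteq> 0" using ne by (simp add: S_def)
        from vec_space.rank_gt_minor[OF G this]
        have "card {j. j < N \<and> j \<in> J} \<le> vec_space.rank N G" .
        then show False using cJ G rk by simp
      qed
    qed
  qed
  show ?thesis
  proof (rule eq_matI)
    fix i j assume ij: "i < dim_row (transpose_mat (mat d N (\<lambda>(a,c). G $$ (a,c))) * mat d N (\<lambda>(a,c). G $$ (a,c)))"
      "j < dim_col (transpose_mat (mat d N (\<lambda>(a,c). G $$ (a,c))) * mat d N (\<lambda>(a,c). G $$ (a,c)))"
    then have ij': "i < N" "j < N" by auto
    have "(transpose_mat (mat d N (\<lambda>(a,c). G $$ (a,c))) * mat d N (\<lambda>(a,c). G $$ (a,c))) $$ (i,j)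
       = (\<Sum>k<d. G $$ (k,i) * G $$ (k,j))"
      using ij' by (simp add: scalar_prod_def atLeast0LessThan)
    then show "G $$ (i,j) = (transpose_mat (mat d N (\<lambda>(a,c). G $$ (a,c))) * mat d N (\<lambda>(a,c). G $$ (a,c))) $$ (i,j)"
      using key[OF ij'] by simp
  qed (use G in auto)
qed

lemma SO_prod:
  assumes A: "A \<in> SO d" and B: "B \<in> SO d"
  shows "transpose_mat A * B \<in> SO d"
proof -
  have Ac: "A \<in> carrier_mat d d" and AtA: "transpose_mat A * A = 1\<^sub>m d" and dA: "det A = 1"
    using A by (auto simp: SO_def)
  have Bc: "B \<in> carrier_mat d d" and BtB: "transpose_mat B * B = 1\<^sub>m d" and dB: "det B = 1"
    using B by (auto simp: SO_def)
  have AAt: "A * transpose_mat A = 1\<^sub>m d"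
    by (rule mat_mult_left_right_inverse[OF _ Ac AtA]) (use Ac in simp)
  have "transpose_mat (transpose_mat A * B) * (transpose_mat A * B)
      = (transpose_mat B * A) * (transpose_mat A * B)"
    using Ac Bc by (subst transpose_mult[of _ d d _ d]) auto
  also have "\<dots> = transpose_mat B * ((A * transpose_mat A) * B)"
    using Ac Bc by (simp add: assoc_mult_mat[of _ d d _ d _ d])
  also have "\<dots> = 1\<^sub>m d" using AAt BtB Bc by simp
  finally have 1: "transpose_mat (transpose_mat A * B) * (transpose_mat A * B) = 1\<^sub>m d" .
  have "det (transpose_mat A * B) = det (transpose_mat A) * det B"
    by (rule det_mult) (use Ac Bc in auto)
  also have "\<dots> = 1" using det_transpose[OF Ac] dA dB by simp
  finally show ?thesis using 1 Ac Bc by (auto simp: SO_def)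
qed

lemma feasA_feasB:
  assumes R: "feasA d m R"
  shows "feasB d m (transpose_mat R * R)"
proof -
  have Rc: "R \<in> carrier_mat d (d*m)" and Ri: "\<And>i. i < m \<Longrightarrow> cblk d R i \<in> SO d"
    using R by (auto simp: feasA_def)
  have "transpose_mat (transpose_mat R * R) = transpose_mat R * R"
    using Rc by (subst transpose_mult[of _ "d*m" d _ "d*m"]) auto
  moreover have "blk d (transpose_mat R * R) i i = 1\<^sub>m d" if "i < m" for i
    using blk_RtR[OF Rc that that] Ri[OF that] by (simp add: SO_def)
  moreover have "blk d (transpose_mat R * R) i (i+1) \<in> SO d" if "i + 1 < m" for i
    using blk_RtR[OF Rc, of i "i+1"] that SO_prod[OF Ri Ri, of i "i+1"] by simp
  ultimately show ?thesis
    unfolding feasB_def using psd_RtR[OF Rc] rank_RtR[OF Rc] Rc by auto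
qed

lemma feasB_feasA:
  assumes GB: "feasB d m G"
  shows "\<exists>R. feasA d m R \<and> G = transpose_mat R * R"
proof (cases "m = 0")
  case True
  have Gc: "G \<in> carrier_mat 0 0" using GB True by (simp add: feasB_def)
  define R :: "real mat" where "R = 0\<^sub>m d 0"
  have "feasA d m R" using True by (simp add: feasA_def R_def)
  moreover have "G = transpose_mat R * R"
    using Gc by (intro eq_matI) (auto simp: R_def)
  ultimately show ?thesis by blast
next
  case False
  define N where "N = d * m"
  have Gc: "G \<in> carrier_mat N N" and sym: "transpose_mat G = G"
    and rk: "mat_rank G \<le> d" and bd: "\<And>i. i < m \<Longrightarrow> blk d G i i = 1\<^sub>m d"
    and bo: "\<And>i. i + 1 < m \<Longrightarrow> blk d G i (i+1) \<in> SO d"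
    using GB by (auto simp: feasB_def N_def)
  have Id: "G $$ (a,b) = (if a = b then 1 else 0)" if "a < d" "b < d" for a b
  proof -
    have "blk d G 0 0 $$ (a,b) = 1\<^sub>m d $$ (a,b)" using bd[of 0] False by simp
    then show ?thesis using that by (simp add: blk_def)
  qed
  have rk': "vec_space.rank N G \<le> d" using rk Gc by (simp add: mat_rank_def)
  define R where "R = mat d N (\<lambda>(a,c). G $$ (a,c))"
  have GR: "G = transpose_mat R * R"
  proof -
    have "d \<le> N" using False by (simp add: N_def)
    then show ?thesis unfolding R_def by (rule gram_from_rank[OF Gc sym _ Id rk'])
  qed
  have Rc: "R \<in> carrier_mat d (d*m)" by (simp add: R_def N_def)
  have Rdet: "i < m \<longrightarrow> det (cblk d R i) = 1" for i
  proof (induction i)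
    case 0
    have "cblk d R 0 = 1\<^sub>m d"
    proof (rule eq_matI)
      fix a b assume ab: "a < dim_row (1\<^sub>m d)" "b < dim_col (1\<^sub>m d)"
      have "a < d * m" "b < d * m" using idx_lt[of a d 0 m] idx_lt[of b d 0 m] ab False by auto
      then show "cblk d R 0 $$ (a,b) = 1\<^sub>m d $$ (a,b)"
        using ab by (simp add: cblk_def R_def N_def Id)
    qed (auto simp: cblk_def)
    then show ?case by simp
  next
    case (Suc i)
    show ?case
    proof
      assume im: "Suc i < m"
      have "blk d G i (i+1) = transpose_mat (cblk d R i) * cblk d R (i+1)"
        using blk_RtR[OF Rc, of i "i+1"] im GR by simp
      then have "transpose_mat (cblk d R i) * cblk d R (i+1) \<in> SO d" using bo[of i] im by simp
      then have "det (transpose_mat (cblk d R i) * cblk d R (i+1)) = 1" by (simp add: SO_def)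
      moreover have "det (transpose_mat (cblk d R i) * cblk d R (i+1))
          = det (transpose_mat (cblk d R i)) * det (cblk d R (i+1))"
        by (rule det_mult) (auto simp: cblk_def)
      moreover have "det (transpose_mat (cblk d R i)) = det (cblk d R i)"
        by (rule det_transpose) (auto simp: cblk_def)
      ultimately show "det (cblk d R (Suc i)) = 1" using Suc.IH im by simp
    qed
  qed
  have "cblk d R i \<in> SO d" if im: "i < m" for i
  proof -
    have "transpose_mat (cblk d R i) * cblk d R i = 1\<^sub>m d"
      using blk_RtR[OF Rc im im] bd[OF im] GR by simp
    then show ?thesis using Rdet[of i] im by (auto simp: SO_def cblk_def)
  qed
  then have "feasA d m R" using Rc by (simp add: feasA_def)
  then show ?thesis using GR by blast
qed

lemma feasB_iff: "feasB d m G \<longleftrightarrow> (\<exists>R. feasA d m R \<and> G = transpose_mat R * R)"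
  using feasA_feasB feasB_feasA by blast

theorem theorem2:
  fixes d m :: nat
    and P :: "nat \<Rightarrow> real vec set"
    and n :: "nat \<Rightarrow> nat \<Rightarrow> nat"
    and x :: "nat \<Rightarrow> nat \<Rightarrow> nat \<Rightarrow> real vec"
    and G :: "real mat"
  assumes P_dim: "\<And>i. i < m \<Longrightarrow> P i \<subseteq> carrier_vec d"
    and n_sym: "\<And>i j. n i j = n j i"
    and x_mem: "\<And>i j k. i < m \<Longrightarrow> j < m \<Longrightarrow> i \<noteq> j \<Longrightarrow> k < n i j \<Longrightarrow> x i j k \<in> P i"
  shows "minB d m (Cmat d m n x) G \<longleftrightarrow>
         (\<exists>R. minA d m (Cmat d m n x) R \<and> G = transpose_mat R * R)"
  unfolding minB_def minA_def feasB_iff by blast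

end
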